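(* Let $\zeta_1$ be a positive random variable with $\mathbb{P}(\zeta_1>y)\sim c\,e^{-\gamma y}$ as $y\to\infty$, for constants $c,\gamma>0$, let $\lambda>0$, and let $\tilde X_1$ be a random variable which, conditionally on $\zeta_1$, is geometric on $\{1,2,\dots\}$ with parameter $e^{-\lambda\zeta_1}$. Set $a=\gamma/\lambda$. Then $$\mathbb{P}(\tilde X_1>k)\sim c\,\Gamma(1+a)\,k^{-a}\qquad\text{as }k\to\infty.$$
   Context: A geometric random variable $G$ on $\{1,2,\dots\}$ with parameter $p$ satisfies $\mathbb{P}(G>k)=(1-p)^k$. $f\sim g$ means $f/g\to1$. *)

theory Defs
  imports "HOL-Probability.Probability" "HOL-Library.Landau_Symbols"
begin

end

theory Submission imports Defs begin

lemma J_has_integral: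
  fixes b :: real and k :: nat
  assumes b: "b \<ge> 0" and k: "k \<ge> 1"
  shows "((\<lambda>u. u powr b * (real k * (1-u)^(k-1))) has_integral
           (Gamma (b+1) * fact k / Gamma (b + real k + 1))) {0..1}"
proof -
  have B: "((\<lambda>t. t powr (b+1 - 1) * (1 - t) powr (real k - 1)) has_integral Beta (b+1) (real k)) {0..1}"
    by (rule has_integral_Beta_real) (use b k in auto)
  have "Beta (b+1) (real k) * real k = Gamma (b+1) * fact k / Gamma (b + real k + 1)"
  proof -
    have "Gamma (real k) * real k = fact k"
    proof -
      obtain m where m: "k = Suc m" using k by (cases k) auto
      have "Gamma (real k) = fact m" using Gamma_fact[of m] m by simp
      thus ?thesis using m by (simp add: fact_Suc algebra_simps)
    qed
    thus ?thesis unfolding Beta_def by (simp add: field_simps add_ac)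
  qed
  moreover have "((\<lambda>t. (t powr (b+1 - 1) * (1 - t) powr (real k - 1)) * real k) has_integral Beta (b+1) (real k) * real k) {0..1}"
    by (rule has_integral_mult_left[OF B])
  ultimately have B2: "((\<lambda>t. (t powr (b+1 - 1) * (1 - t) powr (real k - 1)) * real k) has_integral (Gamma (b+1) * fact k / Gamma (b + real k + 1))) {0..1}"
    by simp
  show ?thesis
  proof (rule has_integral_spike_finite[OF _ _ B2])
    show "finite {1::real}" by simp
    fix x assume x: "x \<in> {0..1} - {1::real}"
    hence "1 - x > 0" by auto
    hence "(1 - x) powr (real k - 1) = (1-x)^(k-1)"
      using k by (simp add: powr_realpow[symmetric] of_nat_diff)
    thus "x powr b * (real k * (1 - x) ^ (k - 1)) = x powr (b + 1 - 1) * (1 - x) powr (real k - 1) * real k"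
      by simp
  qed
qed

lemma J_lim:
  fixes b :: real
  assumes b: "b > 0"
  shows "(\<lambda>k::nat. real k powr b * (Gamma (b+1) * fact k / Gamma (b + real k + 1))) \<longlonglongrightarrow> Gamma (b+1)"
proof -
  have nz: "b \<notin> \<int>\<^sub>\<le>\<^sub>0" using b by (auto elim!: nonpos_Ints_cases)
  have Gb: "Gamma b \<noteq> 0" using Gamma_real_pos[OF b] by simp
  have L: "(\<lambda>n. Gamma_series b n / Gamma b * Gamma (b+1)) \<longlonglongrightarrow> Gamma b / Gamma b * Gamma (b+1)"
    by (intro tendsto_intros) (use Gb in auto)
  have L2: "(\<lambda>n. Gamma_series b n / Gamma b * Gamma (b+1)) \<longlonglongrightarrow> Gamma (b+1)"
    using L Gb by simp
  show ?thesis
  proof (rule Lim_transform_eventually[OF L2])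
    show "\<forall>\<^sub>F n in sequentially. Gamma_series b n / Gamma b * Gamma (b + 1) = real n powr b * (Gamma (b + 1) * fact n / Gamma (b + real n + 1))"
      using eventually_gt_at_top[of "0::nat"]
    proof eventually_elim
      case (elim n)
      have p: "pochhammer b (n+1) = Gamma (b + real (n+1)) / Gamma b"
        using pochhammer_Gamma[OF nz, of "n+1"] by simp
      have e: "exp (b * ln (real n)) = real n powr b" using elim by (simp add: powr_def)
      show ?case unfolding Gamma_series_def p using Gb e by (simp add: field_simps add_ac)
    qed
  qed
qed

lemma ftc_piece:
  fixes U :: real and k :: nat
  assumes U: "0 < U" "U < 1" and k: "k \<ge> 1"
  shows "(\<integral>\<^sup>+u. ennreal (indicator {0..1} u * (real k * (1-u)^(k-1)) * (if U < u then 1 else 0)) \<partial>lborel)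
         = ennreal ((1 - U)^k)"
proof -
  have D: "((\<lambda>u. -((1-u)^k)) has_vector_derivative (real k * (1-u)^(k-1))) (at u within {U..1})" for u
  proof -
    have "((\<lambda>u. -((1-u)^k)) has_real_derivative (real k * (1-u)^(k-1))) (at u within {U..1})"
      by (rule derivative_eq_intros refl | simp)+
    thus ?thesis by (simp add: has_real_derivative_iff_has_vector_derivative)
  qed
  have I: "((\<lambda>u. real k * (1-u)^(k-1)) has_integral (-((1-1)^k) - (-((1-U)^k)))) {U..1}"
    by (rule fundamental_theorem_of_calculus) (use U D in auto)
  have I2: "((\<lambda>u. real k * (1-u)^(k-1)) has_integral (1-U)^k) {U..1}"
    using I k by (simp add: power_0_left)
  have N: "(\<integral>\<^sup>+u. ennreal (indicator {U..1} u * (real k * (1-u)^(k-1))) \<partial>lborel) = ennreal ((1-U)^k)"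
    by (rule nn_integral_has_integral_lebesgue[OF _ I2]) auto
  have "(\<integral>\<^sup>+u. ennreal (indicator {0..1} u * (real k * (1-u)^(k-1)) * (if U < u then 1 else 0)) \<partial>lborel)
      = (\<integral>\<^sup>+u. ennreal (indicator {U..1} u * (real k * (1-u)^(k-1))) \<partial>lborel)"
  proof (rule nn_integral_cong_AE)
    show "AE u in lborel. ennreal (indicator {0..1} u * (real k * (1-u)^(k-1)) * (if U < u then 1 else 0))
       = ennreal (indicator {U..1} u * (real k * (1-u)^(k-1)))"
      using AE_lborel_singleton[of U]
    proof eventually_elim
      case (elim u)
      thus ?case using U by (auto simp: indicator_def)
    qed
  qed
  with N show ?thesis by simp
qed

lemma layer_cake:
  fixes M :: "'a measure" and U :: "'a \<Rightarrow> real" and k :: nat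
  assumes P: "prob_space M" and Um: "U \<in> borel_measurable M"
    and Ub: "\<forall>\<omega>\<in>space M. 0 < U \<omega> \<and> U \<omega> < 1" and k: "k \<ge> 1"
  shows "ennreal (\<integral>\<omega>. (1 - U \<omega>)^k \<partial>M)
     = (\<integral>\<^sup>+u. ennreal (indicator {0..1} u * (real k * (1-u)^(k-1)) * measure M {\<omega>\<in>space M. U \<omega> < u}) \<partial>lborel)"
proof -
  interpret prob_space M by (rule P)
  interpret PS: pair_sigma_finite M lborel
    by (simp add: pair_sigma_finite_def lborel.sigma_finite_measure_axioms sigma_finite_measure_axioms)
  define f where "f = (\<lambda>\<omega> u. ennreal (indicator {0..1} u * (real k * (1-u)^(k-1)) * (if U \<omega> < u then 1 else 0)))"
  have int: "integrable M (\<lambda>\<omega>. (1 - U \<omega>)^k)"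
  proof (rule integrable_const_bound[where B=1])
    show "AE x in M. norm ((1 - U x) ^ k) \<le> 1"
    proof (rule AE_I2)
      fix x assume "x \<in> space M"
      hence "0 \<le> 1 - U x" "1 - U x \<le> 1" using Ub by auto
      thus "norm ((1 - U x) ^ k) \<le> 1" by (simp add: power_le_one)
    qed
  qed (use Um in measurable)
  have "ennreal (\<integral>\<omega>. (1 - U \<omega>)^k \<partial>M) = (\<integral>\<^sup>+\<omega>. ennreal ((1 - U \<omega>)^k) \<partial>M)"
    by (rule nn_integral_eq_integral[OF int, symmetric]) (use Ub in \<open>auto intro!: AE_I2\<close>)
  also have "\<dots> = (\<integral>\<^sup>+\<omega>. (\<integral>\<^sup>+u. f \<omega> u \<partial>lborel) \<partial>M)"
  proof (rule nn_integral_cong)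
    fix x assume "x \<in> space M"
    thus "ennreal ((1 - U x)^k) = (\<integral>\<^sup>+u. f x u \<partial>lborel)"
      unfolding f_def by (intro ftc_piece[symmetric]) (use Ub k in auto)
  qed
  also have "\<dots> = (\<integral>\<^sup>+u. (\<integral>\<^sup>+\<omega>. f \<omega> u \<partial>M) \<partial>lborel)"
    by (rule PS.Fubini'[symmetric]) (unfold f_def, use Um in measurable)
  also have "\<dots> = (\<integral>\<^sup>+u. ennreal (indicator {0..1} u * (real k * (1-u)^(k-1)) * measure M {\<omega>\<in>space M. U \<omega> < u}) \<partial>lborel)"
  proof (rule nn_integral_cong)
    fix u :: real
    define g where "g = indicator {0..1} u * (real k * (1-u)^(k-1))"
    have g0: "g \<ge> 0" unfolding g_def by (auto simp: indicator_def)
    have S: "{\<omega>\<in>space M. U \<omega> < u} \<in> sets M" using Um by measurable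
    have "(\<integral>\<^sup>+\<omega>. f \<omega> u \<partial>M) = (\<integral>\<^sup>+\<omega>. ennreal g * indicator {\<omega>\<in>space M. U \<omega> < u} \<omega> \<partial>M)"
      by (rule nn_integral_cong) (auto simp: f_def g_def indicator_def)
    also have "\<dots> = ennreal g * emeasure M {\<omega>\<in>space M. U \<omega> < u}"
      by (rule nn_integral_cmult_indicator[OF S])
    also have "\<dots> = ennreal (g * measure M {\<omega>\<in>space M. U \<omega> < u})"
      by (simp add: emeasure_eq_measure ennreal_mult g0)
    finally show "(\<integral>\<^sup>+\<omega>. f \<omega> u \<partial>M) = ennreal (indicator {0..1} u * (real k * (1-u)^(k-1)) * measure M {\<omega>\<in>space M. U \<omega> < u})"
      by (simp add: g_def)
  qed
  finally show ?thesis .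
qed

definition JJ :: "real \<Rightarrow> nat \<Rightarrow> real" where
  "JJ b k = Gamma (b+1) * fact k / Gamma (b + real k + 1)"

lemma JJ_nonneg: "b \<ge> 0 \<Longrightarrow> JJ b k \<ge> 0"
  unfolding JJ_def by (intro divide_nonneg_pos mult_nonneg_nonneg Gamma_real_pos less_imp_le) auto

lemma JJ_lim2:
  assumes a: "a > 0"
  shows "(\<lambda>k. real k powr a * JJ (a+1) k) \<longlonglongrightarrow> 0"
proof -
  have eq: "real k powr a * JJ (a+1) k = (a+1) / (a + real k + 1) * (real k powr a * JJ a k)" for k
  proof -
    have nz1: "a + 1 \<notin> \<int>\<^sub>\<le>\<^sub>0" using a by (auto elim!: nonpos_Ints_cases)
    have nz2: "a + real k + 1 \<notin> \<int>\<^sub>\<le>\<^sub>0" using a by (auto elim!: nonpos_Ints_cases)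
    have "Gamma (a + 1 + 1) = (a+1) * Gamma (a+1)" using Gamma_plus1[OF nz1] by simp
    moreover have "Gamma (a + 1 + real k + 1) = (a + real k + 1) * Gamma (a + real k + 1)"
      using Gamma_plus1[OF nz2] by (simp add: add_ac)
    moreover have "a + real k + 1 > 0" using a by simp
    moreover have "Gamma (a + real k + 1) > 0" using a by (intro Gamma_real_pos) simp
    ultimately show ?thesis unfolding JJ_def by (simp add: field_simps)
  qed
  have t1: "(\<lambda>k. (a+1) / (a + real k + 1)) \<longlonglongrightarrow> 0"
    by real_asymp
  have "(\<lambda>k. (a+1) / (a + real k + 1) * (real k powr a * JJ a k)) \<longlonglongrightarrow> 0 * Gamma (a+1)"
    by (intro tendsto_mult t1) (use J_lim[OF a] in \<open>simp add: JJ_def\<close>)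
  thus ?thesis unfolding eq by simp
qed

lemma combo:
  assumes A: "A \<ge> 0" and B: "B \<ge> 0" and k: "k \<ge> 1" and a: "a \<ge> 0"
  shows "(\<integral>\<^sup>+u. ennreal (indicator {0..1} u * (real k*(1-u)^(k-1)) * (A * u powr a + B * u powr (a+1))) \<partial>lborel)
        = ennreal (A * JJ a k + B * JJ (a+1) k)"
proof -
  have I: "((\<lambda>u. A * (u powr a * (real k * (1-u)^(k-1))) + B * (u powr (a+1) * (real k * (1-u)^(k-1))))
      has_integral (A * JJ a k + B * JJ (a+1) k)) {0..1}"
    unfolding JJ_def
    using J_has_integral[of a k] J_has_integral[of "a+1" k] a k
    by (intro has_integral_add has_integral_mult_right) (auto simp: add_ac)
  have N: "(\<integral>\<^sup>+u. ennreal (indicator {0..1} u * (A * (u powr a * (real k * (1-u)^(k-1))) + B * (u powr (a+1) * (real k * (1-u)^(k-1))))) \<partial>lborel)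
        = ennreal (A * JJ a k + B * JJ (a+1) k)"
    by (rule nn_integral_has_integral_lebesgue[OF _ I]) (use A B in auto)
  have eq: "(\<integral>\<^sup>+u. ennreal (indicator {0..1} u * (real k*(1-u)^(k-1)) * (A * u powr a + B * u powr (a+1))) \<partial>lborel)
     = (\<integral>\<^sup>+u. ennreal (indicator {0..1} u * (A * (u powr a * (real k * (1-u)^(k-1))) + B * (u powr (a+1) * (real k * (1-u)^(k-1))))) \<partial>lborel)"
    by (intro nn_integral_cong arg_cong[where f=ennreal]) (simp add: algebra_simps)
  show ?thesis using eq N by (rule trans)
qed

lemma upper_bd:
  fixes S :: "nat \<Rightarrow> real" and H :: "real \<Rightarrow> real"
  assumes a: "a > 0" and c: "c > 0"
    and rep: "\<And>k. k \<ge> 1 \<Longrightarrow> ennreal (S k) = (\<integral>\<^sup>+u. ennreal (indicator {0..1} u * (real k*(1-u)^(k-1)) * H u) \<partial>lborel)"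
    and H1: "\<And>u. H u \<le> 1" and H0: "\<And>u. u \<le> 0 \<Longrightarrow> H u = 0"
    and eps: "\<epsilon> > 0"
    and del: "\<delta> > 0" "\<delta> < 1" "\<forall>u. 0 < u \<and> u \<le> \<delta> \<longrightarrow> \<bar>H u - c * u powr a\<bar> \<le> \<epsilon> * c * u powr a"
  shows "\<exists>B\<ge>0. \<forall>k\<ge>1. S k \<le> (1+\<epsilon>)*c * JJ a k + B * JJ (a+1) k"
proof (intro exI[of _ "\<delta> powr (-(a+1))"] conjI allI impI)
  show "0 \<le> \<delta> powr (-(a+1))" by simp
  fix k :: nat assume k: "k \<ge> 1"
  define B where "B = \<delta> powr (-(a+1))"
  have pw: "H u \<le> (1+\<epsilon>)*c * u powr a + B * u powr (a+1)" if u: "u \<in> {0..1}" for u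
  proof -
    consider "u = 0" | "0 < u" "u \<le> \<delta>" | "\<delta> < u" using u by force
    thus ?thesis
    proof cases
      case 1 thus ?thesis using H0 by simp
    next
      case 2
      hence "H u \<le> c * u powr a + \<epsilon> * c * u powr a" using del(3) by (auto simp: abs_le_iff)
      moreover have "0 \<le> B * u powr (a+1)" by (simp add: B_def)
      ultimately show ?thesis by (simp add: algebra_simps)
    next
      case 3
      have Bd: "B = 1 / \<delta> powr (a+1)" unfolding B_def by (rule powr_minus_divide)
      have "(u / \<delta>) powr (a+1) = u powr (a+1) / \<delta> powr (a+1)"
        using 3 del by (intro powr_divide) 
      hence "B * u powr (a+1) = (u / \<delta>) powr (a+1)" by (simp add: Bd)
      also have "\<dots> \<ge> 1" using 3 del a by (intro ge_one_powr_ge_zero) auto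
      finally have "1 \<le> B * u powr (a+1)" .
      moreover have "0 \<le> (1+\<epsilon>)*c * u powr a" using eps c by simp
      ultimately show ?thesis using H1[of u] by linarith
    qed
  qed
  have "ennreal (S k) \<le> (\<integral>\<^sup>+u. ennreal (indicator {0..1} u * (real k*(1-u)^(k-1)) * ((1+\<epsilon>)*c * u powr a + B * u powr (a+1))) \<partial>lborel)"
    unfolding rep[OF k]
  proof (intro nn_integral_mono ennreal_leI)
    fix u :: real
    show "indicator {0..1} u * (real k*(1-u)^(k-1)) * H u \<le> indicator {0..1} u * (real k*(1-u)^(k-1)) * ((1+\<epsilon>)*c * u powr a + B * u powr (a+1))"
    proof (cases "u \<in> {0..1}")
      case True
      hence "0 \<le> indicator {0..1} u * (real k*(1-u)^(k-1))" by simp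
      thus ?thesis using mult_left_mono[OF pw[OF True]] by blast
    qed simp
  qed
  also have "\<dots> = ennreal ((1+\<epsilon>)*c * JJ a k + B * JJ (a+1) k)"
    by (rule combo) (use eps c k a in \<open>auto simp: B_def\<close>)
  finally have fin: "ennreal (S k) \<le> ennreal ((1+\<epsilon>)*c * JJ a k + B * JJ (a+1) k)" .
  have "0 \<le> (1+\<epsilon>)*c * JJ a k + B * JJ (a+1) k"
    using eps c a by (intro add_nonneg_nonneg mult_nonneg_nonneg JJ_nonneg) (auto simp: B_def)
  with fin show "S k \<le> (1+\<epsilon>)*c * JJ a k + \<delta> powr (-(a+1)) * JJ (a+1) k"
    unfolding B_def by (simp add: ennreal_le_iff)
qed

lemma lower_bd:
  fixes S :: "nat \<Rightarrow> real" and H :: "real \<Rightarrow> real"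
  assumes a: "a > 0" and c: "c > 0"
    and rep: "\<And>k. k \<ge> 1 \<Longrightarrow> ennreal (S k) = (\<integral>\<^sup>+u. ennreal (indicator {0..1} u * (real k*(1-u)^(k-1)) * H u) \<partial>lborel)"
    and Hp: "\<And>u. 0 \<le> H u" and Hm: "mono H" and S0: "\<And>k. S k \<ge> 0"
    and eps: "\<epsilon> > 0" "\<epsilon> < 1"
    and del: "\<delta> > 0" "\<delta> < 1" "\<forall>u. 0 < u \<and> u \<le> \<delta> \<longrightarrow> \<bar>H u - c * u powr a\<bar> \<le> \<epsilon> * c * u powr a"
  shows "\<exists>B\<ge>0. \<forall>k\<ge>1. (1-\<epsilon>)*c * JJ a k \<le> S k + B * JJ (a+1) k"
proof (intro exI[of _ "c / \<delta>"] conjI allI impI)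
  show "0 \<le> c / \<delta>" using c del by simp
  fix k :: nat assume k: "k \<ge> 1"
  define B where "B = c / \<delta>"
  have B0: "B \<ge> 0" using c del by (simp add: B_def)
  define w where "w = (\<lambda>u::real. indicator {0..1} u * (real k*(1-u)^(k-1)))"
  have w0: "w u \<ge> 0" for u by (auto simp: w_def indicator_def)
  have pw: "(1-\<epsilon>)*c * u powr a + 0 * u powr (a+1) \<le> H u + (0 * u powr a + B * u powr (a+1))" if u: "u \<in> {0..1}" for u
  proof -
    consider "u = 0" | "0 < u" "u \<le> \<delta>" | "\<delta> < u" using u by force
    thus ?thesis
    proof cases
      case 1 thus ?thesis using Hp[of u] by simp
    next
      case 2
      hence "c * u powr a - \<epsilon> * c * u powr a \<le> H u" using del(3) by (auto simp: abs_le_iff)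
      moreover have "0 \<le> B * u powr (a+1)" using B0 by simp
      ultimately show ?thesis by (simp add: algebra_simps)
    next
      case 3
      have "B * u powr (a+1) = c * u powr a * (u / \<delta>)"
        using 3 del by (simp add: B_def powr_add)
      also have "\<dots> \<ge> c * u powr a * 1" using 3 del c by (intro mult_left_mono) auto
      finally have "c * u powr a \<le> B * u powr (a+1)" by simp
      moreover have "(1-\<epsilon>)*c * u powr a \<le> c * u powr a" using eps c by (simp add: mult_le_cancel_right)
      ultimately show ?thesis using Hp[of u] by simp
    qed
  qed
  have Hmeas: "H \<in> borel_measurable borel" by (rule borel_measurable_mono[OF Hm])
  have "ennreal ((1-\<epsilon>)*c * JJ a k + 0 * JJ (a+1) k) = (\<integral>\<^sup>+u. ennreal (w u * ((1-\<epsilon>)*c * u powr a + 0 * u powr (a+1))) \<partial>lborel)"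
    unfolding w_def by (rule combo[symmetric]) (use eps c k a in auto)
  also have "\<dots> \<le> (\<integral>\<^sup>+u. (ennreal (w u * H u) + ennreal (w u * (0 * u powr a + B * u powr (a+1)))) \<partial>lborel)"
  proof (intro nn_integral_mono)
    fix u :: real
    have "w u * ((1-\<epsilon>)*c * u powr a + 0 * u powr (a+1)) \<le> w u * (H u + (0 * u powr a + B * u powr (a+1)))"
    proof (cases "u \<in> {0..1}")
      case True
      thus ?thesis using pw[OF True] w0[of u] by (rule_tac mult_left_mono) auto
    qed (simp add: w_def)
    also have "\<dots> = w u * H u + w u * (0 * u powr a + B * u powr (a+1))" by (simp add: algebra_simps)
    finally have le: "w u * ((1-\<epsilon>)*c * u powr a + 0 * u powr (a+1)) \<le> w u * H u + w u * (0 * u powr a + B * u powr (a+1))" .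
    have "ennreal (w u * ((1-\<epsilon>)*c * u powr a + 0 * u powr (a+1))) \<le> ennreal (w u * H u + w u * (0 * u powr a + B * u powr (a+1)))"
      using le by (rule ennreal_leI)
    also have "\<dots> = ennreal (w u * H u) + ennreal (w u * (0 * u powr a + B * u powr (a+1)))"
      by (rule ennreal_plus) (use w0[of u] Hp[of u] B0 in auto)
    finally show "ennreal (w u * ((1-\<epsilon>)*c * u powr a + 0 * u powr (a+1))) \<le> ennreal (w u * H u) + ennreal (w u * (0 * u powr a + B * u powr (a+1)))" .
  qed
  also have "\<dots> = (\<integral>\<^sup>+u. ennreal (w u * H u) \<partial>lborel) + (\<integral>\<^sup>+u. ennreal (w u * (0 * u powr a + B * u powr (a+1))) \<partial>lborel)"
    by (rule nn_integral_add) (use Hmeas in \<open>unfold w_def, measurable\<close>)+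
  also have "\<dots> = ennreal (S k) + ennreal (0 * JJ a k + B * JJ (a+1) k)"
    unfolding rep[OF k] w_def by (subst combo) (use B0 k a in auto)
  also have "\<dots> = ennreal (S k + B * JJ (a+1) k)"
  proof -
    have "0 \<le> B * JJ (a+1) k" using B0 a by (intro mult_nonneg_nonneg JJ_nonneg) auto
    thus ?thesis using S0[of k] by (simp add: ennreal_plus)
  qed
  finally have "ennreal ((1-\<epsilon>)*c * JJ a k) \<le> ennreal (S k + B * JJ (a+1) k)" by simp
  moreover have "0 \<le> S k + B * JJ (a+1) k" using S0[of k] B0 a by (intro add_nonneg_nonneg mult_nonneg_nonneg JJ_nonneg) auto
  ultimately show "(1-\<epsilon>)*c * JJ a k \<le> S k + c / \<delta> * JJ (a+1) k"
    unfolding B_def by (simp add: ennreal_le_iff)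
qed

lemma abstract_lim:
  fixes S :: "nat \<Rightarrow> real" and H :: "real \<Rightarrow> real"
  assumes a: "a > 0" and c: "c > 0"
    and rep: "\<And>k. k \<ge> 1 \<Longrightarrow> ennreal (S k) = (\<integral>\<^sup>+u. ennreal (indicator {0..1} u * (real k*(1-u)^(k-1)) * H u) \<partial>lborel)"
    and Hp: "\<And>u. 0 \<le> H u" and H1: "\<And>u. H u \<le> 1" and H0: "\<And>u. u \<le> 0 \<Longrightarrow> H u = 0"
    and Hm: "mono H" and S0: "\<And>k. S k \<ge> 0"
    and Has: "\<And>\<epsilon>. \<epsilon> > 0 \<Longrightarrow> \<exists>\<delta>. \<delta> > 0 \<and> \<delta> < 1 \<and> (\<forall>u. 0 < u \<and> u \<le> \<delta> \<longrightarrow> \<bar>H u - c * u powr a\<bar> \<le> \<epsilon> * c * u powr a)"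
  shows "(\<lambda>k. real k powr a * S k) \<longlonglongrightarrow> c * Gamma (a+1)"
proof -
  define G where "G = Gamma (a+1)"
  have G: "G > 0" unfolding G_def using a by (intro Gamma_real_pos) simp
  have p: "(\<lambda>k. real k powr a * JJ a k) \<longlonglongrightarrow> G" using J_lim[OF a] by (simp add: JJ_def G_def)
  have q: "(\<lambda>k. real k powr a * JJ (a+1) k) \<longlonglongrightarrow> 0" by (rule JJ_lim2[OF a])
  show ?thesis unfolding G_def[symmetric]
  proof (rule order_tendstoI)
    fix y assume y: "c * G < y"
    define \<epsilon> where "\<epsilon> = (y - c*G) / (2*c*G)"
    have e: "\<epsilon> > 0" using y c G by (simp add: \<epsilon>_def)
    obtain \<delta> where d: "\<delta> > 0" "\<delta> < 1" "\<forall>u. 0 < u \<and> u \<le> \<delta> \<longrightarrow> \<bar>H u - c * u powr a\<bar> \<le> \<epsilon> * c * u powr a"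
      using Has[OF e] by blast
    obtain B where B: "B \<ge> 0" "\<forall>k\<ge>1. S k \<le> (1+\<epsilon>)*c * JJ a k + B * JJ (a+1) k"
      using upper_bd[OF a c rep H1 H0 e d] by blast
    have lim: "(\<lambda>k. (1+\<epsilon>)*c * (real k powr a * JJ a k) + B * (real k powr a * JJ (a+1) k)) \<longlonglongrightarrow> (1+\<epsilon>)*c*G + B * 0"
      by (intro tendsto_intros p q)
    have "(1+\<epsilon>)*c*G + B * 0 < y" using y c G by (simp add: \<epsilon>_def field_simps)
    from order_tendstoD(2)[OF lim this] eventually_ge_at_top[of "1::nat"]
    show "\<forall>\<^sub>F k in sequentially. real k powr a * S k < y"
    proof eventually_elim
      case (elim k)
      have "real k powr a * S k \<le> real k powr a * ((1+\<epsilon>)*c * JJ a k + B * JJ (a+1) k)"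
        using B(2) elim(2) by (intro mult_left_mono) auto
      also have "\<dots> = (1+\<epsilon>)*c * (real k powr a * JJ a k) + B * (real k powr a * JJ (a+1) k)"
        by (simp add: algebra_simps)
      finally show ?case using elim(1) by linarith
    qed
  next
    fix y assume y: "y < c * G"
    define \<epsilon> where "\<epsilon> = min (1/2) ((c*G - y) / (2*c*G))"
    have e: "\<epsilon> > 0" "\<epsilon> < 1" using y c G by (auto simp: \<epsilon>_def)
    obtain \<delta> where d: "\<delta> > 0" "\<delta> < 1" "\<forall>u. 0 < u \<and> u \<le> \<delta> \<longrightarrow> \<bar>H u - c * u powr a\<bar> \<le> \<epsilon> * c * u powr a"
      using Has[OF e(1)] by blast
    obtain B where B: "B \<ge> 0" "\<forall>k\<ge>1. (1-\<epsilon>)*c * JJ a k \<le> S k + B * JJ (a+1) k"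
      using lower_bd[OF a c rep Hp Hm S0 e d] by blast
    have lim: "(\<lambda>k. (1-\<epsilon>)*c * (real k powr a * JJ a k) - B * (real k powr a * JJ (a+1) k)) \<longlonglongrightarrow> (1-\<epsilon>)*c*G - B * 0"
      by (intro tendsto_intros p q)
    have "\<epsilon> * (c*G) \<le> (c*G - y) / (2*c*G) * (c*G)" unfolding \<epsilon>_def
      using c G by (intro mult_right_mono) auto
    also have "\<dots> = (c*G - y)/2" using c G by (simp add: field_simps)
    finally have "y < (1-\<epsilon>)*c*G - B * 0" using y by (simp add: algebra_simps)
    from order_tendstoD(1)[OF lim this] eventually_ge_at_top[of "1::nat"]
    show "\<forall>\<^sub>F k in sequentially. y < real k powr a * S k"
    proof eventually_elim
      case (elim k)
      have "(1-\<epsilon>)*c * (real k powr a * JJ a k) - B * (real k powr a * JJ (a+1) k)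
          = real k powr a * ((1-\<epsilon>)*c * JJ a k - B * JJ (a+1) k)"
        by (simp add: algebra_simps)
      also have "\<dots> \<le> real k powr a * S k"
        using B(2) elim(2) by (intro mult_left_mono) (auto simp: algebra_simps)
      finally show ?case using elim(1) by linarith
    qed
  qed
qed

theorem lemma4p3:
  fixes M :: "'a measure" and \<zeta> :: "'a \<Rightarrow> real" and X :: "'a \<Rightarrow> nat"
    and c \<gamma> lam :: real
  assumes "prob_space M"
    and "\<zeta> \<in> borel_measurable M"
    and "X \<in> measurable M (count_space UNIV)"
    and "\<forall>\<omega>\<in>space M. \<zeta> \<omega> > 0"
    and "c > 0" and "\<gamma> > 0" and "lam > 0"
    and "(\<lambda>y. measure M {\<omega>\<in>space M. \<zeta> \<omega> > y}) \<sim>[at_top] (\<lambda>y. c * exp (- \<gamma> * y))"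
    and "\<forall>k::nat. \<forall>B\<in>sets borel.
           measure M {\<omega>\<in>space M. X \<omega> > k \<and> \<zeta> \<omega> \<in> B}
           = (\<integral>\<omega>. indicator {\<omega>\<in>space M. \<zeta> \<omega> \<in> B} \<omega> * (1 - exp (- lam * \<zeta> \<omega>)) ^ k \<partial>M)"
  shows "(\<lambda>k::nat. measure M {\<omega>\<in>space M. X \<omega> > k})
           \<sim>[at_top] (\<lambda>k. c * Gamma (1 + \<gamma> / lam) * real k powr (- (\<gamma> / lam)))"
proof -
  note P = assms(1) and zm = assms(2) and zp = assms(4) and c = assms(5) and g = assms(6) and l = assms(7)
    and asy = assms(8) and rep0 = assms(9)
  interpret prob_space M by (rule P)
  define a where "a = \<gamma> / lam"
  have a: "a > 0" using g l by (simp add: a_def)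
  define U where "U = (\<lambda>\<omega>. exp (- lam * \<zeta> \<omega>))"
  have Um: "U \<in> borel_measurable M" unfolding U_def using zm by measurable
  have Ub: "\<forall>\<omega>\<in>space M. 0 < U \<omega> \<and> U \<omega> < 1"
    using zp l by (auto simp: U_def)
  define S where "S = (\<lambda>k::nat. measure M {\<omega>\<in>space M. X \<omega> > k})"
  define H where "H = (\<lambda>u. measure M {\<omega>\<in>space M. U \<omega> < u})"
  have SI: "S k = (\<integral>\<omega>. (1 - U \<omega>)^k \<partial>M)" for k
  proof -
    have "S k = (\<integral>\<omega>. indicator {\<omega>\<in>space M. \<zeta> \<omega> \<in> UNIV} \<omega> * (1 - exp (- lam * \<zeta> \<omega>)) ^ k \<partial>M)"
      using bspec[OF spec[OF rep0, of k], of UNIV] by (simp add: S_def)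
    also have "\<dots> = (\<integral>\<omega>. (1 - U \<omega>)^k \<partial>M)"
      by (rule Bochner_Integration.integral_cong[OF refl]) (simp add: U_def)
    finally show ?thesis .
  qed
  have rep: "ennreal (S k) = (\<integral>\<^sup>+u. ennreal (indicator {0..1} u * (real k*(1-u)^(k-1)) * H u) \<partial>lborel)"
    if k: "k \<ge> 1" for k
    unfolding SI H_def by (rule layer_cake[OF P Um Ub k])
  have Hp: "\<And>u. 0 \<le> H u" by (simp add: H_def)
  have H1: "\<And>u. H u \<le> 1" by (simp add: H_def)
  have H0: "H u = 0" if "u \<le> 0" for u
  proof -
    have "{\<omega>\<in>space M. U \<omega> < u} = {}" using Ub that by force
    thus ?thesis by (simp only: H_def) simp
  qed
  have Hm: "mono H"
  proof (rule monoI)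
    fix u v :: real assume "u \<le> v"
    hence "{\<omega>\<in>space M. U \<omega> < u} \<subseteq> {\<omega>\<in>space M. U \<omega> < v}" by auto
    moreover have "{\<omega>\<in>space M. U \<omega> < v} \<in> sets M" using Um by measurable
    ultimately show "H u \<le> H v" unfolding H_def by (rule finite_measure_mono)
  qed
  have S0: "\<And>k. S k \<ge> 0" by (simp add: S_def)
  define F where "F = (\<lambda>y. measure M {\<omega>\<in>space M. \<zeta> \<omega> > y})"
  have FG: "((\<lambda>y. F y / (c * exp (- \<gamma> * y))) \<longlongrightarrow> 1) at_top"
    unfolding F_def by (rule asymp_equivD_strong[OF asy]) (use c in auto)
  have Has: "\<exists>\<delta>. \<delta> > 0 \<and> \<delta> < 1 \<and> (\<forall>u. 0 < u \<and> u \<le> \<delta> \<longrightarrow> \<bar>H u - c * u powr a\<bar> \<le> \<epsilon> * c * u powr a)"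
    if e: "\<epsilon> > 0" for \<epsilon>
  proof -
    have "\<forall>\<^sub>F y in at_top. dist (F y / (c * exp (- \<gamma> * y))) 1 < \<epsilon> \<and> y \<ge> 1"
      using tendstoD[OF FG e] eventually_ge_at_top[of "1::real"] by eventually_elim auto
    then obtain Y where Y: "\<And>y. y \<ge> Y \<Longrightarrow> dist (F y / (c * exp (- \<gamma> * y))) 1 < \<epsilon> \<and> y \<ge> 1"
      by (auto simp: eventually_at_top_linorder)
    have Y1: "Y \<ge> 1" using Y[of Y] by simp
    define \<delta> where "\<delta> = exp (- lam * Y)"
    have d: "\<delta> > 0" "\<delta> < 1" using Y1 l by (auto simp: \<delta>_def)
    show ?thesis
    proof (intro exI[of _ \<delta>] conjI d allI impI)
      fix u :: real assume u: "0 < u \<and> u \<le> \<delta>"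
      define y where "y = - ln u / lam"
      have "ln u \<le> ln \<delta>" using u d by simp
      hence "ln u \<le> - lam * Y" by (simp add: \<delta>_def)
      hence yY: "y \<ge> Y" using l by (simp add: y_def field_simps)
      have Hu: "H u = F y"
      proof -
        have "{\<omega>\<in>space M. U \<omega> < u} = {\<omega>\<in>space M. \<zeta> \<omega> > y}"
        proof (intro Collect_cong conj_cong refl)
          fix \<omega>
          have "U \<omega> < u \<longleftrightarrow> - lam * \<zeta> \<omega> < ln u"
          proof -
            have "U \<omega> < u \<longleftrightarrow> exp (- lam * \<zeta> \<omega>) < exp (ln u)" using u by (simp add: U_def)
            thus ?thesis by simp
          qed
          also have "\<dots> \<longleftrightarrow> \<zeta> \<omega> > y" using l by (auto simp: y_def field_simps)
          finally show "U \<omega> < u \<longleftrightarrow> \<zeta> \<omega> > y" .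
        qed
        thus ?thesis by (simp add: H_def F_def)
      qed
      have gu: "c * exp (- \<gamma> * y) = c * u powr a"
        using u l by (simp add: y_def a_def powr_def field_simps)
      have gp: "c * u powr a > 0" using c u by simp
      have "\<bar>F y / (c * u powr a) - 1\<bar> < \<epsilon>" using Y[OF yY] unfolding gu by (simp add: dist_real_def)
      hence "\<bar>(F y - c * u powr a) / (c * u powr a)\<bar> < \<epsilon>" using gp e by (simp add: diff_divide_distrib)
      hence "\<bar>F y - c * u powr a\<bar> / (c * u powr a) < \<epsilon>" using gp by simp
      hence "\<bar>F y - c * u powr a\<bar> < \<epsilon> * (c * u powr a)" using gp by (simp add: divide_less_eq)
      thus "\<bar>H u - c * u powr a\<bar> \<le> \<epsilon> * c * u powr a" using Hu by simp
    qed
  qed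
  have L: "(\<lambda>k. real k powr a * S k) \<longlonglongrightarrow> c * Gamma (a+1)"
    by (rule abstract_lim[OF a c rep Hp H1 H0 Hm S0 Has]) auto
  have CG: "c * Gamma (a+1) > 0" using c a by (simp add: Gamma_real_pos)
  have CG2: "c \<noteq> 0 \<and> Gamma (a+1) \<noteq> 0" using CG by auto
  have L2: "(\<lambda>k. real k powr a * S k / (c * Gamma (a+1))) \<longlonglongrightarrow> 1"
  proof -
    have "(\<lambda>k. real k powr a * S k / (c * Gamma (a+1))) \<longlonglongrightarrow> c * Gamma (a + 1) / (c * Gamma (a + 1))"
      using CG by (intro tendsto_divide L tendsto_const) auto
    thus ?thesis using CG2 by simp
  qed
  show ?thesis
  proof (rule asymp_equivI')
    show "((\<lambda>k. measure M {\<omega>\<in>space M. X \<omega> > k} / (c * Gamma (1 + \<gamma> / lam) * real k powr (- (\<gamma> / lam)))) \<longlongrightarrow> 1) at_top"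
    proof (rule Lim_transform_eventually[OF L2])
      show "\<forall>\<^sub>F k in at_top. real k powr a * S k / (c * Gamma (a+1)) = measure M {\<omega>\<in>space M. X \<omega> > k} / (c * Gamma (1 + \<gamma> / lam) * real k powr (- (\<gamma> / lam)))"
        using eventually_gt_at_top[of "0::nat"]
      proof eventually_elim
        case (elim k)
        thus ?case using CG by (simp add: S_def a_def powr_minus field_simps add_ac)
      qed
    qed
  qed
qed

end
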